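(* Let $h$ be even, let $\psi$ be an additive character of $\mathbb{F}_{q^2}$ of conductor $q^2$, let $\chi\in\mathcal A_\psi$, and let $\theta_1,\theta_2$ be characters of $H_1'$ extending $\widetilde\psi$. Let $\widetilde\chi_i=\widetilde\chi_{\theta_i}$ for $i=1,2$. Then $$\mathrm{Ind}_{H'}^{\mathcal U}(\widetilde\chi_1)\cong\mathrm{Ind}_{H'}^{\mathcal U}(\widetilde\chi_2).$$
   Context: Let $p$ be a prime, $q$ a power of $p$, $\ell\ne p$, and $h\ge2$ an even integer. For a commutative $\mathbb{F}_q$-algebra $A$, $U_h^{2,q}(A)$ is the set of formal expressions $1+\sum_{i=1}^{2(h-1)}a_i\tau^i$ ($a_i\in A$) with multiplication obtained by extending $(a\tau^i)(b\tau^j)=ab^{q^i}\tau^{i+j}$ bi-additively, $\tau^0=1$, $\tau^k=0$ for $k>2(h-1)$. In $\mathcal U=U_h^{2,q}(\mathbb{F}_{q^2})$ let $H=\{1+\sum a_i\tau^i: a_i=0\text{ for odd } i\}$; $H_0'=\{a_i=0\text{ unless } i=2(h-1)\text{ or } i\text{ odd}>h-1\}$; $H_1'=\{a_i=0\text{ unless } i=2(h-1)\text{ or } i\text{ odd}\ge h-1;\ a_{h-1}\in\mathbb{F}_q\}$ (abelian); $H'=\{a_i=0\text{ for odd } i<h-1,\ a_{h-1}\in\mathbb{F}_q\}=H\cdot H_1'$. Let $L=\mathbb{F}_{q^2}((\pi))$, $U_L^i=1+\pi^i\mathbb{F}_{q^2}[[\pi]]$, and identify $U_L^1/U_L^h\cong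 H$ via $1+\sum_{i=1}^{h-1}a_i\pi^i\mapsto1+\sum a_i\tau^{2i}$. An additive character $\psi\colon\mathbb{F}_{q^2}\to\overline{\mathbb{Q}}_\ell^\times$ has conductor $q^2$ if there exists $x$ with $\psi(x^q)\ne\psi(x)$; $\widetilde\psi(1+\sum a_i\tau^i)=\psi(a_{2(h-1)})$ on $H_0'$. $\mathcal A_\psi$ is the set of characters $\chi$ of $U_L^1/U_L^h$ (i.e. of $H$) with $\chi(1+a\pi^{h-1})=\psi(a)$. For a character $\theta$ of $H_1'$ extending $\widetilde\psi$, $\widetilde\chi_\theta$ is the character of $H'$ given by $\widetilde\chi_\theta(kn)=\chi(k)\theta(n)$ for $k\in H$, $n\in H_1'$ (well defined and multiplicative). *)

theory Defs
  imports Complex_Main "HOL-Computational_Algebra.Primes"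
begin

text \<open>An element 1 + sum a_i tau^i of U_h^{2,q}(A) is represented by its coefficient
  function c :: nat => A with c 0 = 1 and c i = 0 for i > 2(h-1).\<close>

definition Ucar :: "nat \<Rightarrow> (nat \<Rightarrow> 'a::field) set" where
  "Ucar h = {c. c 0 = 1 \<and> (\<forall>i>2*(h-1). c i = 0)}"

text \<open>Multiplication: (a tau^i)(b tau^j) = a b^(q^i) tau^(i+j), truncated above 2(h-1).\<close>
definition umult :: "nat \<Rightarrow> nat \<Rightarrow> (nat \<Rightarrow> 'a::field) \<Rightarrow> (nat \<Rightarrow> 'a) \<Rightarrow> (nat \<Rightarrow> 'a)" where
  "umult q h c d = (\<lambda>k. if k \<le> 2*(h-1) then (\<Sum>i\<le>k. c i * (d (k-i)) ^ (q ^ i)) else 0)"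

definition Hset :: "nat \<Rightarrow> (nat \<Rightarrow> 'a::field) set" where
  "Hset h = {c \<in> Ucar h. \<forall>i. odd i \<longrightarrow> c i = 0}"

definition H0' :: "nat \<Rightarrow> (nat \<Rightarrow> 'a::field) set" where
  "H0' h = {c \<in> Ucar h. \<forall>i. i \<noteq> 0 \<and> i \<noteq> 2*(h-1) \<and> \<not>(odd i \<and> i > h-1) \<longrightarrow> c i = 0}"

definition H1' :: "nat \<Rightarrow> nat \<Rightarrow> (nat \<Rightarrow> 'a::field) set" where
  "H1' q h = {c \<in> Ucar h. (\<forall>i. i \<noteq> 0 \<and> i \<noteq> 2*(h-1) \<and> \<not>(odd i \<and> i \<ge> h-1) \<longrightarrow> c i = 0)
                          \<and> c (h-1) ^ q = c (h-1)}"

definition H' :: "nat \<Rightarrow> nat \<Rightarrow> (nat \<Rightarrow> 'a::field) set" where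
  "H' q h = {c \<in> Ucar h. (\<forall>i. odd i \<and> i < h-1 \<longrightarrow> c i = 0) \<and> c (h-1) ^ q = c (h-1)}"

definition is_char :: "'g set \<Rightarrow> ('g \<Rightarrow> 'g \<Rightarrow> 'g) \<Rightarrow> ('g \<Rightarrow> complex) \<Rightarrow> bool" where
  "is_char G m \<chi> \<longleftrightarrow> (\<forall>x\<in>G. \<chi> x \<noteq> 0) \<and> (\<forall>x\<in>G. \<forall>y\<in>G. \<chi> (m x y) = \<chi> x * \<chi> y)"

definition add_char :: "('a::field \<Rightarrow> complex) \<Rightarrow> bool" where
  "add_char \<psi> \<longleftrightarrow> (\<forall>x. \<psi> x \<noteq> 0) \<and> (\<forall>x y. \<psi> (x + y) = \<psi> x * \<psi> y)"

definition conductor_q2 :: "nat \<Rightarrow> ('a::field \<Rightarrow> complex) \<Rightarrow> bool" where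
  "conductor_q2 q \<psi> \<longleftrightarrow> (\<exists>x. \<psi> (x ^ q) \<noteq> \<psi> x)"

definition psi_tilde :: "nat \<Rightarrow> ('a::field \<Rightarrow> complex) \<Rightarrow> (nat \<Rightarrow> 'a) \<Rightarrow> complex" where
  "psi_tilde h \<psi> c = \<psi> (c (2*(h-1)))"

text \<open>Image of 1 + a pi^(h-1) under U_L^1/U_L^h = H, i.e. 1 + a tau^(2(h-1)).\<close>
definition tauTop :: "nat \<Rightarrow> 'a::field \<Rightarrow> (nat \<Rightarrow> 'a)" where
  "tauTop h a = (\<lambda>i. if i = 0 then 1 else if i = 2*(h-1) then a else 0)"

definition A_psi :: "nat \<Rightarrow> nat \<Rightarrow> ('a::field \<Rightarrow> complex) \<Rightarrow> ((nat \<Rightarrow> 'a) \<Rightarrow> complex) set" where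
  "A_psi q h \<psi> = {\<chi>. is_char (Hset h) (umult q h) \<chi> \<and> (\<forall>a. \<chi> (tauTop h a) = \<psi> a)}"

definition extends_psi_tilde :: "nat \<Rightarrow> nat \<Rightarrow> ('a::field \<Rightarrow> complex) \<Rightarrow> ((nat \<Rightarrow> 'a) \<Rightarrow> complex) \<Rightarrow> bool" where
  "extends_psi_tilde q h \<psi> \<theta> \<longleftrightarrow> is_char (H1' q h) (umult q h) \<theta> \<and> (\<forall>c\<in>H0' h. \<theta> c = psi_tilde h \<psi> c)"

definition chi_tilde :: "nat \<Rightarrow> nat \<Rightarrow> ((nat \<Rightarrow> 'a::field) \<Rightarrow> complex) \<Rightarrow> ((nat \<Rightarrow> 'a) \<Rightarrow> complex)
    \<Rightarrow> (nat \<Rightarrow> 'a) \<Rightarrow> complex" where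
  "chi_tilde q h \<chi> \<theta> g = (SOME v. \<exists>k\<in>Hset h. \<exists>n\<in>H1' q h. g = umult q h k n \<and> v = \<chi> k * \<theta> n)"

definition IndSp :: "nat \<Rightarrow> nat \<Rightarrow> (nat \<Rightarrow> 'a::field) set \<Rightarrow> ((nat \<Rightarrow> 'a) \<Rightarrow> complex)
    \<Rightarrow> ((nat \<Rightarrow> 'a) \<Rightarrow> complex) set" where
  "IndSp q h K \<chi> = {f. (\<forall>g. g \<notin> Ucar h \<longrightarrow> f g = 0) \<and>
      (\<forall>x\<in>K. \<forall>g\<in>Ucar h. f (umult q h x g) = \<chi> x * f g)}"

definition IndAct :: "nat \<Rightarrow> nat \<Rightarrow> (nat \<Rightarrow> 'a::field) \<Rightarrow> ((nat \<Rightarrow> 'a) \<Rightarrow> complex)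
    \<Rightarrow> ((nat \<Rightarrow> 'a) \<Rightarrow> complex)" where
  "IndAct q h x f = (\<lambda>g. if g \<in> Ucar h then f (umult q h g x) else 0)"

definition Ind_iso :: "nat \<Rightarrow> nat \<Rightarrow> (nat \<Rightarrow> 'a::field) set \<Rightarrow> ((nat \<Rightarrow> 'a) \<Rightarrow> complex)
    \<Rightarrow> ((nat \<Rightarrow> 'a) \<Rightarrow> complex) \<Rightarrow> bool" where
  "Ind_iso q h K \<chi>1 \<chi>2 \<longleftrightarrow> (\<exists>T. bij_betw T (IndSp q h K \<chi>1) (IndSp q h K \<chi>2) \<and>
      (\<forall>f\<in>IndSp q h K \<chi>1. \<forall>f'\<in>IndSp q h K \<chi>1. T (\<lambda>g. f g + f' g) = (\<lambda>g. T f g + T f' g)) \<and>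
      (\<forall>c. \<forall>f\<in>IndSp q h K \<chi>1. T (\<lambda>g. c * f g) = (\<lambda>g. c * T f g)) \<and>
      (\<forall>x\<in>Ucar h. \<forall>f\<in>IndSp q h K \<chi>1. T (IndAct q h x f) = IndAct q h x (T f)))"

end

theory Submission
  imports Defs "HOL-Algebra.Group" "HOL-Library.FuncSet"
begin

locale UG =
  fixes T :: "'a::{field,finite} itself" and q h :: nat
  assumes h2: "2 \<le> h" and heven: "even h" and q2: "2 \<le> q"
    and frob: "\<And>x y :: 'a::{field,finite}. (x + y) ^ q = x ^ q + y ^ q"
    and fq2: "\<And>x :: 'a. x ^ (q^2) = x"
begin

definition hm :: nat where "hm = h - 1"
definition NN :: nat where "NN = 2*(h-1)"
lemma hfacts: "hm \<noteq> 0" "hm < NN" "NN \<noteq> 0" "odd hm" "even NN" "h - 1 = hm" "2*(h-1) = NN"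
   "h - Suc 0 = hm" "2*(h - Suc 0) = NN" "1 \<le> hm"
  using h2 heven by (auto simp: hm_def NN_def)
lemma hNN: "NN = hm + hm"
  using h2 heven by (auto simp: hm_def NN_def)
lemma umult_def': "umult q h c d = (\<lambda>k. if k \<le> NN then (\<Sum>i\<le>k. c i * (d (k-i)) ^ (q ^ i)) else 0)"
  by (simp add: umult_def NN_def)

lemma frobp: "(x + y::'a) ^ (q^i) = x^(q^i) + y^(q^i)"
proof (induction i)
  case (Suc i)
  have "(x + y::'a) ^ (q^Suc i) = ((x+y)^(q^i))^q" by (simp only: power_Suc2 power_mult)
  also have "\<dots> = (x^(q^i))^q + (y^(q^i))^q" using Suc frob by simp
  finally show ?case by (simp only: power_Suc2 power_mult)
qed simp

lemma zero_pw: "(0::'a)^(q^i) = 0" using q2 by simp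

lemma frob_minus: "(-x::'a)^(q^i) = - (x^(q^i))"
proof -
  have "x^(q^i) + (-x)^(q^i) = 0" using frobp[of x "-x" i] zero_pw[of i] by simp
  thus ?thesis by (simp add: eq_neg_iff_add_eq_0 add.commute)
qed

lemma frob_diff: "(x - y::'a)^(q^i) = x^(q^i) - y^(q^i)"
  using frobp[of x "-y" i] frob_minus[of y i] by simp

lemma frob_sum: "(sum f A :: 'a)^(q^i) = sum (\<lambda>j. f j ^ (q^i)) A"
  by (induction A rule: infinite_finite_induct) (simp_all add: zero_pw frobp)

lemma pw_even: "(x::'a)^(q^(2*j)) = x"
proof (induction j)
  case (Suc j)
  have "q^(2*Suc j) = q^(2*j) * q^2" by (simp add: power_add[symmetric])
  hence "x^(q^(2*Suc j)) = (x^(q^(2*j)))^(q^2)" by (simp only: power_mult)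
  thus ?case using Suc fq2 by simp
qed simp

lemma pw: "(x::'a)^(q^i) = (if even i then x else x^q)"
proof (cases "even i")
  case True then obtain j where "i = 2*j" by blast
  thus ?thesis using pw_even True by simp
next
  case False then obtain j where j: "i = 2*j+1" using oddE by blast
  have "x^(q^i) = (x^(q^(2*j)))^q" unfolding j by (simp only: power_add power_one_right power_mult)
  thus ?thesis using pw_even False by simp
qed

lemma um_le: "k \<le> NN \<Longrightarrow> umult q h c d k = (\<Sum>i\<le>k. c i * d (k-i) ^ q^i)"
  by (simp add: umult_def')
lemma um_gt: "\<not> k \<le> NN \<Longrightarrow> umult q h c d k = (0::'a)"
  by (simp add: umult_def')

lemma assoc: "umult q h (umult q h c d) e = umult q h c (umult q h d (e::nat\<Rightarrow>'a))"
proof (rule ext)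
  fix k
  show "umult q h (umult q h c d) e k = umult q h c (umult q h d e) k"
  proof (cases "k \<le> NN")
    case False thus ?thesis by (simp add: um_gt)
  next
    case True
    define G where "G i l = c i * d l ^ q^i * e (k-i-l) ^ q^(i+l)" for i l
    have "umult q h (umult q h c d) e k = (\<Sum>j\<le>k. (\<Sum>i\<le>j. c i * d (j-i) ^ q^i) * e (k-j) ^ q^j)"
      using True by (simp add: um_le)
    also have "\<dots> = (\<Sum>j\<le>k. \<Sum>i\<le>j. G i (j-i))"
      by (rule sum.cong[OF refl], simp add: sum_distrib_right G_def)
    also have "\<dots> = (\<Sum>(i,l)\<in>{(i,l). i+l \<le> k}. G i l)"
      by (rule sum.triangle_reindex_eq[symmetric])
    also have "{(i,l). i+l \<le> k} = Sigma {..k} (\<lambda>i. {..k-i})" by auto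
    also have "(\<Sum>(i,l)\<in>Sigma {..k} (\<lambda>i. {..k-i}). G i l) = (\<Sum>i\<le>k. \<Sum>l\<le>k-i. G i l)"
      by (rule sum.Sigma[symmetric]) auto
    also have "\<dots> = (\<Sum>i\<le>k. c i * (\<Sum>l\<le>k-i. d l * e (k-i-l) ^ q^l) ^ q^i)"
      by (rule sum.cong[OF refl]) (simp add: frob_sum sum_distrib_left G_def power_mult_distrib
            flip: power_mult power_add mult.assoc, simp add: mult.commute add.commute)
    also have "\<dots> = umult q h c (umult q h d e) k"
      using True by (simp add: um_le)
    finally show ?thesis .
  qed
qed

definition e :: "nat \<Rightarrow> 'a" where "e = (\<lambda>i. if i = 0 then 1 else 0)"
definition G :: "(nat \<Rightarrow> 'a) monoid" where
  "G = \<lparr>carrier = Ucar h, mult = umult q h, one = e\<rparr>"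

lemma sum_single: "finite S \<Longrightarrow> a \<in> S \<Longrightarrow> (\<And>x. x \<in> S \<Longrightarrow> x \<noteq> a \<Longrightarrow> f x = 0) \<Longrightarrow> sum f S = f a"
  by (simp add: sum.remove[of S a])

lemma Ucar_iff: "c \<in> Ucar h \<longleftrightarrow> c 0 = 1 \<and> (\<forall>i. \<not> i \<le> NN \<longrightarrow> c i = 0)"
  by (auto simp: Ucar_def not_le NN_def)

lemma e_Ucar: "e \<in> Ucar h" using h2 by (simp add: Ucar_iff e_def)

lemma closed: "c \<in> Ucar h \<Longrightarrow> d \<in> Ucar h \<Longrightarrow> umult q h c d \<in> Ucar h"
  by (simp add: Ucar_iff umult_def')

lemma e_left: "umult q h e x = x" if "x \<in> Ucar h" for x :: "nat \<Rightarrow> 'a"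
proof
  fix k show "umult q h e x k = x k"
  proof (cases "k \<le> NN")
    case True
    have "umult q h e x k = (\<Sum>i\<le>k. e i * x (k-i) ^ q^i)" using True by (simp add: um_le)
    also have "\<dots> = e 0 * x (k-0) ^ q^0" by (rule sum_single) (auto simp: e_def)
    finally show ?thesis by (simp add: e_def)
  qed (use that in \<open>simp add: um_gt Ucar_iff\<close>)
qed

lemma e_right: "umult q h x e = x" if "x \<in> Ucar h" for x :: "nat \<Rightarrow> 'a"
proof
  fix k show "umult q h x e k = x k"
  proof (cases "k \<le> NN")
    case True
    have "umult q h x e k = (\<Sum>i\<le>k. x i * e (k-i) ^ q^i)" using True by (simp add: um_le)
    also have "\<dots> = x k * e (k-k) ^ q^k" by (rule sum_single) (auto simp: e_def zero_pw)
    finally show ?thesis by (simp add: e_def)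
  qed (use that in \<open>simp add: um_gt Ucar_iff\<close>)
qed

lemma finite_Ucar: "finite (Ucar h :: (nat \<Rightarrow> 'a) set)"
proof -
  have "Ucar h \<subseteq> (\<lambda>f. \<lambda>i. if i \<le> NN then f i else (0::'a)) ` (PiE {..NN} (\<lambda>_. UNIV))"
  proof
    fix c :: "nat \<Rightarrow> 'a" assume c: "c \<in> Ucar h"
    have "c = (\<lambda>i. if i \<le> NN then restrict c {..NN} i else 0)"
      using c by (auto simp: Ucar_iff)
    thus "c \<in> (\<lambda>f. \<lambda>i. if i \<le> NN then f i else (0::'a)) ` (PiE {..NN} (\<lambda>_. UNIV))"
      by (intro image_eqI[where x="restrict c {..NN}"]) auto
  qed
  thus ?thesis by (rule finite_subset) (intro finite_imageI finite_PiE, auto)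
qed

lemma right_inj: "inj_on (\<lambda>x. umult q h x c) (Ucar h)" if c: "c \<in> Ucar h" for c :: "nat \<Rightarrow> 'a"
proof
  fix x y assume x: "x \<in> Ucar h" and y: "y \<in> Ucar h" and eq: "umult q h x c = umult q h y c"
  show "x = y"
  proof (rule ccontr)
    assume "x \<noteq> y"
    then obtain i where "x i \<noteq> y i" by auto
    define m where "m = (LEAST i. x i \<noteq> y i)"
    have m: "x m \<noteq> y m" unfolding m_def by (rule LeastI[of _ i]) fact
    have lt: "x j = y j" if "j < m" for j using not_less_Least[of j "\<lambda>i. x i \<noteq> y i"] that m_def by auto
    have mN: "m \<le> NN" using m x y unfolding Ucar_iff by metis
    have "0 = umult q h x c m - umult q h y c m" using eq by simp
    also have "\<dots> = (\<Sum>i\<le>m. (x i - y i) * c (m-i) ^ q^i)"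
      using mN by (simp add: um_le sum_subtractf[symmetric] left_diff_distrib)
    also have "\<dots> = (x m - y m) * c (m-m) ^ q^m"
      by (rule sum_single) (auto simp: lt)
    also have "\<dots> = x m - y m" using c by (simp add: Ucar_iff)
    finally show False using m by simp
  qed
qed

lemma group_G: "group G"
proof (rule groupI)
  fix x assume x: "x \<in> carrier G"
  hence xU: "x \<in> Ucar h" by (simp add: G_def)
  have "(\<lambda>y. umult q h y x) ` Ucar h = Ucar h"
    by (rule endo_inj_surj[OF finite_Ucar]) (use closed xU right_inj in auto)
  then obtain y where "y \<in> Ucar h" "umult q h y x = e" using e_Ucar by (metis imageE)
  thus "\<exists>y\<in>carrier G. y \<otimes>\<^bsub>G\<^esub> x = \<one>\<^bsub>G\<^esub>" by (auto simp: G_def)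
qed (auto simp: G_def closed e_Ucar e_left assoc)

lemma umult_diff_right: "umult q h c (\<lambda>m. a m - b m) = (\<lambda>m. umult q h c a m - umult q h c b m :: 'a)"
  by (rule ext) (simp add: umult_def' frob_diff right_diff_distrib sum_subtractf)
lemma umult_diff_left: "umult q h (\<lambda>m. a m - b m) c = (\<lambda>m. umult q h a c m - umult q h b c m :: 'a)"
  by (rule ext) (simp add: umult_def' left_diff_distrib sum_subtractf)
lemma umult_add_left: "umult q h (\<lambda>m. a m + b m) c = (\<lambda>m. umult q h a c m + umult q h b c m :: 'a)"
  by (rule ext) (simp add: umult_def' distrib_right sum.distrib)

lemma triL:
  fixes c y :: "nat \<Rightarrow> 'a"
  assumes c0: "c 0 = 1" and cA: "\<And>i. c i \<noteq> 0 \<Longrightarrow> A i"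
    and zB: "\<And>m. m \<le> NN \<Longrightarrow> \<not> B m \<Longrightarrow> umult q h c y m = 0"
    and cl: "\<And>i j. A i \<Longrightarrow> B j \<Longrightarrow> i + j \<le> NN \<Longrightarrow> B (i+j)"
  shows "m \<le> NN \<Longrightarrow> \<not> B m \<Longrightarrow> y m = 0"
proof (induction m rule: less_induct)
  case (less m)
  have "0 = umult q h c y m" using zB less by simp
  also have "\<dots> = (\<Sum>i\<le>m. c i * y (m-i) ^ q^i)" using less by (simp add: um_le)
  also have "\<dots> = c 0 * y (m-0) ^ q^0"
  proof (rule sum_single)
    fix i assume i: "i \<in> {..m}" "i \<noteq> 0"
    show "c i * y (m-i) ^ q^i = 0"
    proof (cases "c i = 0 \<or> y (m-i) = 0")
      case True thus ?thesis using zero_pw by auto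
    next
      case False
      hence "A i" using cA by auto
      moreover have "B (m-i)"
      proof (rule ccontr)
        assume "\<not> B (m-i)"
        hence "y (m-i) = 0" using less.IH[of "m-i"] i less.prems by auto
        thus False using False by simp
      qed
      ultimately have "B m" using cl[of i "m-i"] i less.prems by auto
      thus ?thesis using less.prems by simp
    qed
  qed auto
  finally show ?case using c0 by simp
qed

lemma triR:
  fixes c y :: "nat \<Rightarrow> 'a"
  assumes c0: "c 0 = 1" and cA: "\<And>i. c i \<noteq> 0 \<Longrightarrow> A i"
    and zB: "\<And>m. m \<le> NN \<Longrightarrow> \<not> B m \<Longrightarrow> umult q h y c m = 0"
    and cl: "\<And>i j. A i \<Longrightarrow> B j \<Longrightarrow> i + j \<le> NN \<Longrightarrow> B (i+j)"
  shows "m \<le> NN \<Longrightarrow> \<not> B m \<Longrightarrow> y m = 0"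
proof (induction m rule: less_induct)
  case (less m)
  have "0 = umult q h y c m" using zB less by simp
  also have "\<dots> = (\<Sum>i\<le>m. y i * c (m-i) ^ q^i)" using less by (simp add: um_le)
  also have "\<dots> = y m * c (m-m) ^ q^m"
  proof (rule sum_single)
    fix i assume i: "i \<in> {..m}" "i \<noteq> m"
    show "y i * c (m-i) ^ q^i = 0"
    proof (cases "y i = 0 \<or> c (m-i) = 0")
      case True thus ?thesis using zero_pw by auto
    next
      case False
      hence "A (m-i)" using cA by auto
      moreover have "B i"
      proof (rule ccontr)
        assume "\<not> B i"
        hence "y i = 0" using less.IH[of "i"] i less.prems by auto
        thus False using False by simp
      qed
      ultimately have "B m" using cl[of "m-i" i] i less.prems by auto
      thus ?thesis using less.prems by simp
    qed
  qed auto
  finally show ?case using c0 by simp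
qed

lemma supp_mult:
  assumes "umult q h c d m \<noteq> (0::'a)"
  shows "\<exists>i\<le>m. c i \<noteq> 0 \<and> d (m-i) \<noteq> 0 \<and> m \<le> NN"
proof -
  have mN: "m \<le> NN" using assms by (auto simp: umult_def' split: if_splits)
  hence "(\<Sum>i\<le>m. c i * d (m-i) ^ q^i) \<noteq> 0" using assms by (simp add: um_le)
  then obtain i where "i \<in> {..m}" "c i * d (m-i) ^ q^i \<noteq> 0"
    using sum.not_neutral_contains_not_neutral by blast
  thus ?thesis using mN zero_pw by (metis atMost_iff mult_eq_0_iff)
qed


definition U :: "'a \<Rightarrow> 'a \<Rightarrow> nat \<Rightarrow> 'a" where
  "U \<beta> \<gamma> = (\<lambda>i. if i = 0 then 1 else if i = hm then \<beta> else if i = NN then \<gamma> else 0)"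

lemma U_Ucar: "U \<beta> \<gamma> \<in> Ucar h" using hfacts by (auto simp: Ucar_iff U_def)

lemma UL: assumes "m \<le> NN"
  shows "umult q h (U \<beta> \<gamma>) n m = n m + (if hm \<le> m then \<beta> * n (m-(hm)) ^ q else 0)
     + (if m = NN then \<gamma> * n 0 else 0)"
proof -
  have pt: "U \<beta> \<gamma> i * n (m-i) ^ q^i = (if i = 0 then n m else 0) + (if i = hm then \<beta> * n (m-(hm)) ^ q else 0)
     + (if i = NN then \<gamma> * n (m - NN) else 0)" for i
    using hfacts by (cases "i = 0"; cases "i = hm"; cases "i = NN") (simp_all add: U_def pw)
  have "umult q h (U \<beta> \<gamma>) n m = (\<Sum>i\<le>m. U \<beta> \<gamma> i * n (m-i) ^ q^i)" using assms by (simp add: um_le)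
  also have "\<dots> = n m + (if hm \<le> m then \<beta> * n (m-(hm)) ^ q else 0)
     + (if NN \<le> m then \<gamma> * n (m - NN) else 0)"
    unfolding pt sum.distrib by simp
  finally show ?thesis using assms by auto
qed

lemma UR: assumes "m \<le> NN"
  shows "umult q h n (U \<beta> \<gamma>) m = n m + (if hm \<le> m then n (m-(hm)) * (if even (m-(hm)) then \<beta> else \<beta> ^ q) else 0)
     + (if m = NN then n 0 * \<gamma> else 0)"
proof -
  have pt: "n i * U \<beta> \<gamma> (m-i) ^ q^i = (if i = m then n m else 0) + (if i = m-(hm) then (if hm \<le> m then n i * \<beta> ^ q^i else 0) else 0)
     + (if i = 0 then (if m = NN then n 0 * \<gamma> else 0) else 0)" if "i \<in> {..m}" for i
  proof -
    have im: "i \<le> m" using that by simp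
    have h1: "hm \<ge> 1" "NN = 2*(hm)" using hfacts by auto
    consider "m - i = 0" | "m - i = hm" | "m - i = NN" | "m-i \<noteq> 0" "m-i \<noteq> hm" "m-i \<noteq> NN" by blast
    then show ?thesis
    proof cases
      case 1 hence i: "i = m" using im by simp
      have a: "\<not> (i = m - (hm) \<and> hm \<le> m)" using i h1 by auto
      have b: "\<not> (i = 0 \<and> m = NN)" using i h1 by auto
      show ?thesis using 1 i a b by (auto simp: U_def)
    next
      case 2 hence i: "i = m - (hm)" "hm \<le> m" using im h1 by auto
      have a: "i \<noteq> m" using i h1 by auto
      have b: "\<not> (i = 0 \<and> m = NN)" using i h1 by auto
      show ?thesis using 2 i a b hfacts by (auto simp: U_def)
    next
      case 3 hence i: "i = 0" "m = NN" using im assms by auto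
      have a: "i \<noteq> m" "i \<noteq> m - (hm)" using i h1 by auto
      show ?thesis using 3 i a hfacts by (auto simp: U_def)
    next
      case 4
      have a: "i \<noteq> m" "\<not> (i = m - (hm) \<and> hm \<le> m)" "\<not> (i = 0 \<and> m = NN)" using 4 im by auto
      show ?thesis using 4 a zero_pw by (auto simp: U_def)
    qed
  qed
  have "umult q h n (U \<beta> \<gamma>) m = (\<Sum>i\<le>m. n i * U \<beta> \<gamma> (m-i) ^ q^i)" using assms by (simp add: um_le)
  also have "\<dots> = (\<Sum>i\<le>m. (if i = m then n m else 0) + (if i = m-(hm) then (if hm \<le> m then n i * \<beta> ^ q^i else 0) else 0)
     + (if i = 0 then (if m = NN then n 0 * \<gamma> else 0) else 0))"
    by (rule sum.cong[OF refl]) (rule pt)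
  also have "\<dots> = n m + (if hm \<le> m then n (m-(hm)) * \<beta> ^ q^(m-(hm)) else 0)
     + (if m = NN then n 0 * \<gamma> else 0)"
    by (simp only: sum.distrib sum.delta finite_atMost) simp
  finally show ?thesis by (simp add: pw)
qed

end

context UG begin

sublocale gr: group G by (rule group_G)

lemma G_simps[simp]: "carrier G = Ucar h" "mult G = umult q h" "one G = e"
  by (simp_all add: G_def)

lemma tauTop_U: "tauTop h z = U 0 z"
  using hfacts by (auto simp: tauTop_def U_def)

lemma U0[simp]: "U \<beta> \<gamma> 0 = 1" by (simp add: U_def)
lemma Uh[simp]: "U \<beta> \<gamma> (hm) = \<beta>" using hfacts by (simp add: U_def)
lemma UN[simp]: "U \<beta> \<gamma> NN = \<gamma>" using hfacts by (simp add: U_def)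
lemma Uo: "i \<noteq> 0 \<Longrightarrow> i \<noteq> hm \<Longrightarrow> i \<noteq> NN \<Longrightarrow> U \<beta> \<gamma> i = 0" by (simp add: U_def)
lemma NNh: "NN - hm = hm" using hNN by simp
lemma one_pw: "(1::'a)^q = 1" by simp

lemma inv_U: "inv\<^bsub>G\<^esub> (U \<beta> \<gamma>) = U (-\<beta>) (\<beta> * \<beta>^q - \<gamma>)"
proof (rule gr.inv_equality)
  show "U (-\<beta>) (\<beta> * \<beta>^q - \<gamma>) \<otimes>\<^bsub>G\<^esub> U \<beta> \<gamma> = \<one>\<^bsub>G\<^esub>"
  proof (simp, rule ext)
    fix m
    show "umult q h (U (- \<beta>) (\<beta> * \<beta> ^ q - \<gamma>)) (U \<beta> \<gamma>) m = e m"
    proof (cases "m \<le> NN")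
      case False thus ?thesis using hfacts by (simp add: um_gt e_def)
    next
      case True
      have L: "umult q h (U (- \<beta>) (\<beta> * \<beta> ^ q - \<gamma>)) (U \<beta> \<gamma>) m = U \<beta> \<gamma> m + (if hm \<le> m then (-\<beta>) * U \<beta> \<gamma> (m-(hm)) ^ q else 0)
     + (if m = NN then (\<beta> * \<beta> ^ q - \<gamma>) * U \<beta> \<gamma> 0 else 0)" by (rule UL[OF True])
      have z: "U \<beta> \<gamma> (m - (hm)) = 0" if "hm \<le> m" "m \<noteq> hm" "m \<noteq> NN"
        using that True hfacts by (intro Uo) auto
      consider "m = 0" | "m = hm" | "m = NN" | "m \<noteq> 0" "m \<noteq> hm" "m \<noteq> NN" by blast
      then show ?thesis
      proof cases
        case 1 thus ?thesis using L hfacts by (simp add: e_def)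
      next
        case 2 thus ?thesis using L hfacts by (simp add: e_def)
      next
        case 3 thus ?thesis using L hfacts by (simp add: e_def NNh)
      next
        case 4 thus ?thesis using L z Uo[of m] zero_pw[of 1] by (simp add: e_def)
      qed
    qed
  qed
qed (simp_all add: U_Ucar)

lemma h2m: "2*hm = NN" using hNN by simp
lemmas hsimp = hfacts(6-9) h2m
lemma hh: "h = Suc hm" using h2 by (simp add: hm_def)

lemma H1'_iff: "c \<in> H1' q h \<longleftrightarrow> c \<in> Ucar h \<and> (\<forall>i. i \<noteq> 0 \<and> i \<noteq> NN \<and> \<not>(odd i \<and> hm \<le> i) \<longrightarrow> c i = 0) \<and> c hm ^ q = c hm"
  by (simp add: H1'_def hsimp)
lemma H0'_iff: "c \<in> H0' h \<longleftrightarrow> c \<in> Ucar h \<and> (\<forall>i. i \<noteq> 0 \<and> i \<noteq> NN \<and> \<not>(odd i \<and> hm < i) \<longrightarrow> c i = 0)"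
  by (simp add: H0'_def hsimp)
lemma H'_iff: "c \<in> H' q h \<longleftrightarrow> c \<in> Ucar h \<and> (\<forall>i. odd i \<and> i < hm \<longrightarrow> c i = 0) \<and> c hm ^ q = c hm"
  by (simp add: H'_def hsimp)
lemma Hset_iff: "c \<in> Hset h \<longleftrightarrow> c \<in> Ucar h \<and> (\<forall>i. odd i \<longrightarrow> c i = 0)"
  by (simp add: Hset_def)

lemma zq: "(0::'a)^q = 0" using q2 by simp

lemma conjU_n:
  assumes n: "n \<in> H1' q h"
  shows "umult q h (U \<beta> \<gamma>) n = umult q h (U 0 ((\<beta> - \<beta>^q) * n hm)) (umult q h n (U \<beta> \<gamma>))"
proof (rule ext)
  fix m
  define z where "z = (\<beta> - \<beta>^q) * n hm"
  have nU: "n \<in> Ucar h" and nz: "\<And>i. i \<noteq> 0 \<Longrightarrow> i \<noteq> NN \<Longrightarrow> \<not>(odd i \<and> hm \<le> i) \<Longrightarrow> n i = 0"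
    and nq: "n hm ^ q = n hm" using n by (auto simp: H1'_iff)
  have n0: "n 0 = 1" using nU by (simp add: Ucar_iff)
  show "umult q h (U \<beta> \<gamma>) n m = umult q h (U 0 z) (umult q h n (U \<beta> \<gamma>)) m"
  proof (cases "m \<le> NN")
    case False thus ?thesis by (simp add: um_gt)
  next
    case True
    have y0: "umult q h n (U \<beta> \<gamma>) 0 = 1" using closed[OF nU U_Ucar] by (simp add: Ucar_iff)
    have key: "(if hm \<le> m then \<beta> * n (m-hm) ^ q else 0) = (if hm \<le> m then n (m-hm) * (if even (m-hm) then \<beta> else \<beta>^q) else 0) + (if m = NN then z else 0)"
    proof (cases "hm \<le> m")
      case False thus ?thesis using hfacts(2) by auto
    next
      case hm: True
      consider "m = hm" | "m = NN" | "m \<noteq> hm" "m \<noteq> NN" by blast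
      thus ?thesis
      proof cases
        case 1 thus ?thesis using hfacts(2) n0 by simp
      next
        case 2
        have "\<beta> * n hm ^ q = n hm * \<beta> ^ q + z" using nq by (simp add: z_def algebra_simps)
        thus ?thesis using 2 hfacts(4) less_imp_le[OF hfacts(2)] by (simp add: NNh)
      next
        case 3
        have "m - hm \<noteq> 0" "m - hm \<noteq> NN" "\<not>(odd (m-hm) \<and> hm \<le> m - hm)" using 3 hm True hNN by auto
        hence "n (m-hm) = 0" by (rule nz)
        thus ?thesis using 3 hm zq by simp
      qed
    qed
    have L: "umult q h (U \<beta> \<gamma>) n m = n m + (if hm \<le> m then \<beta> * n (m-hm) ^ q else 0) + (if m = NN then \<gamma> * n 0 else 0)"
      by (rule UL[OF True])
    have R1: "umult q h (U 0 z) (umult q h n (U \<beta> \<gamma>)) m = umult q h n (U \<beta> \<gamma>) m + (if hm \<le> m then 0 * umult q h n (U \<beta> \<gamma>) (m-hm) ^ q else 0)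
       + (if m = NN then z * umult q h n (U \<beta> \<gamma>) 0 else 0)"
      by (rule UL[OF True])
    have R2: "umult q h n (U \<beta> \<gamma>) m = n m + (if hm \<le> m then n (m-hm) * (if even (m-hm) then \<beta> else \<beta> ^ q) else 0)
     + (if m = NN then n 0 * \<gamma> else 0)" by (rule UR[OF True])
    show ?thesis unfolding L R1 R2 y0 n0 using key by simp

  qed
qed


lemma conj_diff:
  assumes k: "k \<in> Hset h" and ne: "umult q h (U \<beta> \<gamma>) k m - umult q h k (U \<beta> \<gamma>) m \<noteq> 0"
  shows "odd m \<and> h \<le> m \<and> m \<le> NN"
proof -
  have kU: "k \<in> Ucar h" and ko: "\<And>i. odd i \<Longrightarrow> k i = 0" using k by (auto simp: Hset_iff)
  have k0: "k 0 = 1" using kU by (simp add: Ucar_iff)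
  have mN: "m \<le> NN"
  proof (rule ccontr)
    assume "\<not> m \<le> NN" thus False using ne by (simp add: um_gt)
  qed
  have D: "umult q h (U \<beta> \<gamma>) k m - umult q h k (U \<beta> \<gamma>) m =
     (if hm \<le> m then \<beta> * k (m-hm) ^ q - k (m-hm) * (if even (m-hm) then \<beta> else \<beta>^q) else 0)"
    using mN by (simp add: UL UR k0)
  have hm: "hm \<le> m" using ne D by (auto split: if_splits)
  have "even (m - hm)"
  proof (rule ccontr)
    assume "odd (m - hm)"
    hence "k (m - hm) = 0" by (rule ko)
    thus False using ne D hm zq by simp
  qed
  moreover have "m - hm \<noteq> 0" using ne D hm k0 by auto
  moreover have "odd hm" by (rule hfacts)
  ultimately show ?thesis using hm mN hh by auto
qed

lemma mult_B_U:
  assumes B: "\<And>m. d m \<noteq> 0 \<Longrightarrow> odd m \<and> h \<le> m \<and> m \<le> NN"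
  shows "umult q h d (U \<beta> \<gamma>) = (d :: nat \<Rightarrow> 'a)"
proof (rule ext)
  fix m
  show "umult q h d (U \<beta> \<gamma>) m = d m"
  proof (cases "m \<le> NN")
    case False thus ?thesis using B by (auto simp: um_gt)
  next
    case True
    have d0: "d 0 = 0" using B h2 by fastforce
    have dz: "d (m - hm) = 0" if "hm \<le> m"
    proof (rule ccontr)
      assume "d (m - hm) \<noteq> 0"
      hence "h \<le> m - hm" using B by blast
      thus False using True that hNN hh by linarith
    qed
    have dz': "(if hm \<le> m then d (m - hm) * X else 0) = 0" for X using dz by simp
    show ?thesis unfolding UR[OF True] dz' using d0 by simp
  qed
qed

lemma inv_U_Ucar: "inv\<^bsub>G\<^esub> (U \<beta> \<gamma>) \<in> Ucar h" by (simp add: inv_U U_Ucar)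

lemma clB: "even i \<Longrightarrow> odd j \<and> h \<le> j \<Longrightarrow> odd (i+j) \<and> h \<le> i+j" by auto

lemma conjU_k:
  assumes k: "k \<in> Hset h"
  shows "\<exists>w. w \<in> H0' h \<and> w NN = 0 \<and> umult q h (umult q h (U \<beta> \<gamma>) k) (inv\<^bsub>G\<^esub> (U \<beta> \<gamma>)) = umult q h k w"
proof -
  let ?u = "U \<beta> \<gamma>" let ?v = "inv\<^bsub>G\<^esub> (U \<beta> \<gamma>)"
  have kU: "k \<in> Ucar h" and ko: "\<And>i. odd i \<Longrightarrow> k i = 0" using k by (auto simp: Hset_iff)
  define d where "d m = umult q h ?u k m - umult q h k ?u m" for m
  have dB: "\<And>m. d m \<noteq> 0 \<Longrightarrow> odd m \<and> h \<le> m \<and> m \<le> NN" unfolding d_def using conj_diff[OF k] by blast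
  have uk: "umult q h ?u k = (\<lambda>m. umult q h k ?u m + d m)" by (rule ext) (simp add: d_def)
  have kuv: "umult q h (umult q h k ?u) ?v = k"
    using assoc gr.r_inv[of ?u] U_Ucar e_right[OF kU] by simp
  have dv: "umult q h d ?v = d" unfolding inv_U by (rule mult_B_U) (rule dB)
  define P where "P = (\<lambda>m. k m + d m)"
  have uP: "umult q h (umult q h ?u k) ?v = P"
    unfolding uk umult_add_left kuv dv P_def ..
  have PU: "P \<in> Ucar h" unfolding uP[symmetric] using closed[OF closed[OF U_Ucar kU] inv_U_Ucar] .
  have ikU: "inv\<^bsub>G\<^esub> k \<in> Ucar h" using gr.inv_closed[of k] kU by simp
  define w where "w = umult q h (inv\<^bsub>G\<^esub> k) P"
  have wU: "w \<in> Ucar h" unfolding w_def using closed[OF ikU PU] .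
  have kw: "umult q h k w = P" unfolding w_def
    using assoc[of k "inv\<^bsub>G\<^esub> k" P, symmetric] gr.r_inv[of k] kU e_left[OF PU] by simp
  have wB: "w m = e m" if "m \<le> NN" "\<not> (odd m \<and> h \<le> m)" for m
  proof -
    have "(\<lambda>m. w m - e m) m = 0"
    proof (rule triL[where c=k and A=even and B="\<lambda>m. odd m \<and> h \<le> m"])
      show "k 0 = 1" using kU by (simp add: Ucar_iff)
      show "\<And>i. k i \<noteq> 0 \<Longrightarrow> even i" using ko by blast
      show "\<And>m. m \<le> NN \<Longrightarrow> \<not> (odd m \<and> h \<le> m) \<Longrightarrow> umult q h k (\<lambda>m. w m - e m) m = 0"
      proof -
        fix m assume "m \<le> NN" "\<not> (odd m \<and> h \<le> m)"
        hence "d m = 0" using dB by blast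
        thus "umult q h k (\<lambda>m. w m - e m) m = 0"
          unfolding umult_diff_right kw e_right[OF kU] by (simp add: P_def)
      qed
      show "\<And>i j. even i \<Longrightarrow> odd j \<and> h \<le> j \<Longrightarrow> i + j \<le> NN \<Longrightarrow> odd (i + j) \<and> h \<le> i + j" by auto
    qed (use that in auto)
    thus ?thesis by simp
  qed
  have "w \<in> H0' h"
    unfolding H0'_iff
  proof (intro conjI wU allI impI)
    fix i assume i: "i \<noteq> 0 \<and> i \<noteq> NN \<and> \<not> (odd i \<and> hm < i)"
    show "w i = 0"
    proof (cases "i \<le> NN")
      case True thus ?thesis using wB[of i] i hh by (auto simp: e_def)
    next
      case False thus ?thesis using wU by (simp add: Ucar_iff)
    qed
  qed
  moreover have "w NN = 0" using wB[of NN] hfacts(3,5) by (simp add: e_def)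
  moreover have "umult q h (umult q h ?u k) ?v = umult q h k w" using uP kw by simp
  ultimately show ?thesis by blast
qed

lemma invU: "x \<in> Ucar h \<Longrightarrow> inv\<^bsub>G\<^esub> x \<in> Ucar h" using gr.inv_closed[of x] by simp
lemma mul_inv_cancel: "k \<in> Ucar h \<Longrightarrow> x \<in> Ucar h \<Longrightarrow> umult q h k (umult q h (inv\<^bsub>G\<^esub> k) x) = x"
  using assoc[of k "inv\<^bsub>G\<^esub> k" x, symmetric] gr.r_inv[of k] e_left[of x] by simp

lemma decomp:
  fixes x :: "nat \<Rightarrow> 'a"
  assumes x: "x \<in> H' q h"
  shows "\<exists>k n. k \<in> Hset h \<and> n \<in> H1' q h \<and> x = umult q h k n \<and> n hm = x hm"
proof -
  have xU: "x \<in> Ucar h" and xo: "\<And>i. odd i \<Longrightarrow> i < hm \<Longrightarrow> x i = 0" and xq: "x hm ^ q = x hm"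
    using x by (auto simp: H'_iff)
  define k where "k i = (if even i then x i else 0)" for i
  have kU: "k \<in> Ucar h" using xU by (auto simp: Ucar_iff k_def)
  have kH: "k \<in> Hset h" using kU by (simp add: Hset_iff k_def)
  define n where "n = umult q h (inv\<^bsub>G\<^esub> k) x"
  have nU: "n \<in> Ucar h" unfolding n_def by (rule closed[OF invU[OF kU] xU])
  have kn: "umult q h k n = x" unfolding n_def by (rule mul_inv_cancel[OF kU xU])
  define n0 where "n0 i = (if odd i then x i else e i)" for i
  have kn0: "umult q h k n0 m = x m" if m: "m \<le> NN" "\<not> (odd m \<and> h \<le> m)" for m
  proof (cases "even m")
    case True
    have "umult q h k n0 m = (\<Sum>i\<le>m. k i * n0 (m-i) ^ q^i)" using m by (simp add: um_le)
    also have "\<dots> = k m * n0 (m-m) ^ q^m"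
    proof (rule sum_single)
      fix i assume i: "i \<in> {..m}" "i \<noteq> m"
      show "k i * n0 (m-i) ^ q^i = 0"
      proof (cases "even i")
        case True
        hence "n0 (m-i) = 0" using i \<open>even m\<close> by (auto simp: n0_def e_def)
        thus ?thesis using zero_pw by simp
      qed (simp add: k_def)
    qed auto
    also have "\<dots> = x m" using True by (simp add: k_def n0_def e_def)
    finally show ?thesis .
  next
    case False
    hence mh: "m \<le> hm" using m hh by auto
    have "umult q h k n0 m = (\<Sum>i\<le>m. k i * n0 (m-i) ^ q^i)" using m by (simp add: um_le)
    also have "\<dots> = k 0 * n0 (m-0) ^ q^0"
    proof (rule sum_single)
      fix i assume i: "i \<in> {..m}" "i \<noteq> 0"
      show "k i * n0 (m-i) ^ q^i = 0"
      proof (cases "even i")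
        case True
        hence "odd (m - i)" "m - i < hm" using i False mh by auto
        hence "n0 (m-i) = 0" using xo by (simp add: n0_def)
        thus ?thesis using zero_pw by simp
      qed (simp add: k_def)
    qed auto
    also have "\<dots> = x m" using False xU by (simp add: k_def n0_def Ucar_iff)
    finally show ?thesis .
  qed
  have nB: "n m = n0 m" if "m \<le> NN" "\<not> (odd m \<and> h \<le> m)" for m
  proof -
    have "(\<lambda>m. n m - n0 m) m = 0"
    proof (rule triL[where c=k and A=even and B="\<lambda>m. odd m \<and> h \<le> m"])
      show "k 0 = 1" using kU by (simp add: Ucar_iff)
      show "\<And>i. k i \<noteq> 0 \<Longrightarrow> even i" by (simp add: k_def split: if_splits)
      show "\<And>m. m \<le> NN \<Longrightarrow> \<not> (odd m \<and> h \<le> m) \<Longrightarrow> umult q h k (\<lambda>m. n m - n0 m) m = 0"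
        unfolding umult_diff_right kn using kn0 by simp
      show "\<And>i j. even i \<Longrightarrow> odd j \<and> h \<le> j \<Longrightarrow> i + j \<le> NN \<Longrightarrow> odd (i + j) \<and> h \<le> i + j" by auto
    qed (use that in auto)
    thus ?thesis by simp
  qed
  have nhm: "n hm = x hm" using nB[of hm] hfacts(2,4) hh by (simp add: n0_def)
  have "n \<in> H1' q h"
    unfolding H1'_iff
  proof (intro conjI nU allI impI)
    fix i assume i: "i \<noteq> 0 \<and> i \<noteq> NN \<and> \<not> (odd i \<and> hm \<le> i)"
    show "n i = 0"
    proof (cases "i \<le> NN")
      case True
      hence "n i = n0 i" using nB[of i] i hh by auto
      thus ?thesis using i xo[of i] by (auto simp: n0_def e_def)
    next
      case False thus ?thesis using nU by (simp add: Ucar_iff)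
    qed
  next
    show "n hm ^ q = n hm" using nhm xq by simp
  qed
  thus ?thesis using kH kn nhm by blast
qed

lemma hm_coord:
  fixes c d :: "nat \<Rightarrow> 'a"
  assumes "c \<in> Ucar h" "d \<in> Ucar h" "\<And>i. odd i \<Longrightarrow> i < hm \<Longrightarrow> c i = 0" "\<And>i. odd i \<Longrightarrow> i < hm \<Longrightarrow> d i = 0"
  shows "umult q h c d hm = c hm + d hm"
proof -
  have "umult q h c d hm = (\<Sum>i\<le>hm. c i * d (hm-i) ^ q^i)" using hfacts(2) by (simp add: um_le)
  also have "\<dots> = (\<Sum>i\<in>{0,hm}. c i * d (hm-i) ^ q^i)"
  proof (rule sum.mono_neutral_right)
    show "\<forall>i\<in>{..hm} - {0, hm}. c i * d (hm - i) ^ q ^ i = 0"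
    proof
      fix i assume i: "i \<in> {..hm} - {0, hm}"
      show "c i * d (hm - i) ^ q ^ i = 0"
      proof (cases "odd i")
        case True thus ?thesis using assms(3) i by auto
      next
        case False
        hence "odd (hm - i)" "hm - i < hm" using i hfacts(4) by auto
        thus ?thesis using assms(4) zero_pw by simp
      qed
    qed
  qed auto
  also have "\<dots> = c hm + d hm" using hfacts(1) assms(1,2) by (simp add: Ucar_iff)
  finally show ?thesis .
qed

lemma H'_mult:
  fixes c d :: "nat \<Rightarrow> 'a"
  shows "c \<in> H' q h \<Longrightarrow> d \<in> H' q h \<Longrightarrow> umult q h c d \<in> H' q h"
proof -
  assume c: "c \<in> H' q h" and d: "d \<in> H' q h"
  have cU: "c \<in> Ucar h" "\<And>i. odd i \<Longrightarrow> i < hm \<Longrightarrow> c i = 0" "c hm ^ q = c hm" using c by (auto simp: H'_iff)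
  have dU: "d \<in> Ucar h" "\<And>i. odd i \<Longrightarrow> i < hm \<Longrightarrow> d i = 0" "d hm ^ q = d hm" using d by (auto simp: H'_iff)
  show ?thesis unfolding H'_iff
  proof (intro conjI allI impI)
    show "umult q h c d \<in> Ucar h" using closed cU dU by blast
    fix i assume i: "odd i \<and> i < hm"
    show "umult q h c d i = 0"
    proof (rule ccontr)
      assume "umult q h c d i \<noteq> 0"
      then obtain j where j: "j \<le> i" "c j \<noteq> 0" "d (i-j) \<noteq> 0" using supp_mult by blast
      show False
      proof (cases "odd j")
        case True thus False using j cU(2)[of j] i by auto
      next
        case False
        hence "odd (i - j)" "i - j < hm" using i j by auto
        thus False using dU(2) j by blast
      qed
    qed
  next
    show "umult q h c d hm ^ q = umult q h c d hm"
      using hm_coord[OF cU(1) dU(1) cU(2) dU(2)] frob[of "c hm" "d hm"] cU(3) dU(3) by simp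
  qed
qed

lemma H1'_sub:
  fixes c :: "nat \<Rightarrow> 'a"
  assumes c: "c \<in> H1' q h" shows "c \<in> H' q h"
proof -
  have "c \<in> Ucar h" "c hm^q = c hm" and z: "\<And>i. i\<noteq>0 \<Longrightarrow> i\<noteq>NN \<Longrightarrow> \<not>(odd i \<and> hm \<le> i) \<Longrightarrow> c i = 0"
    using c by (auto simp: H1'_iff)
  moreover have "odd i \<and> i < hm \<longrightarrow> c i = 0" for i using z[of i] hfacts(2) by (cases "i = 0") auto
  ultimately show ?thesis by (auto simp: H'_iff)
qed
lemma Hset_sub:
  fixes c d :: "nat \<Rightarrow> 'a"
  shows "c \<in> Hset h \<Longrightarrow> c \<in> H' q h"
  using hfacts(4) zq by (auto simp: Hset_iff H'_iff)
lemma H0'_sub: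
  fixes c d :: "nat \<Rightarrow> 'a"
  shows "c \<in> H0' h \<Longrightarrow> c \<in> H1' q h"
proof -
  assume c: "c \<in> H0' h"
  hence "c hm = 0" using hfacts(1,2) by (auto simp: H0'_iff)
  thus ?thesis using c zq by (auto simp: H0'_iff H1'_iff)
qed

lemma H1'_mult:
  fixes c d :: "nat \<Rightarrow> 'a"
  shows "c \<in> H1' q h \<Longrightarrow> d \<in> H1' q h \<Longrightarrow> umult q h c d \<in> H1' q h"
proof -
  assume c: "c \<in> H1' q h" and d: "d \<in> H1' q h"
  have H': "umult q h c d \<in> H' q h" using H'_mult H1'_sub c d by blast
  have cz: "\<And>i. i \<noteq> 0 \<Longrightarrow> i \<noteq> NN \<Longrightarrow> \<not> (odd i \<and> hm \<le> i) \<Longrightarrow> c i = 0" using c by (auto simp: H1'_iff)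
  have dz: "\<And>i. i \<noteq> 0 \<Longrightarrow> i \<noteq> NN \<Longrightarrow> \<not> (odd i \<and> hm \<le> i) \<Longrightarrow> d i = 0" using d by (auto simp: H1'_iff)
  show ?thesis
    unfolding H1'_iff
  proof (intro conjI allI impI)
    show "umult q h c d \<in> Ucar h" using H' by (simp add: H'_iff)
    show "umult q h c d hm ^ q = umult q h c d hm" using H' by (simp add: H'_iff)
    fix i assume i: "i \<noteq> 0 \<and> i \<noteq> NN \<and> \<not> (odd i \<and> hm \<le> i)"
    show "umult q h c d i = 0"
    proof (rule ccontr)
      assume "umult q h c d i \<noteq> 0"
      then obtain j where j: "j \<le> i" "c j \<noteq> 0" "d (i-j) \<noteq> 0" "i \<le> NN" using supp_mult by blast
      have cj: "j = 0 \<or> j = NN \<or> (odd j \<and> hm \<le> j)" using cz j(2) by blast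
      have dj: "i-j = 0 \<or> i-j = NN \<or> (odd (i-j) \<and> hm \<le> i-j)" using dz j(3) by blast
      show False using cj dj i j hNN hfacts(1) by auto
    qed
  qed
qed

lemma tauTop_H0': "tauTop h (a::'a) \<in> H0' h"
  unfolding tauTop_U H0'_iff using U_Ucar hfacts(1,2) by (auto simp: U_def)

lemma tauTop_H: "tauTop h (a::'a) \<in> Hset h"
  unfolding tauTop_U Hset_iff using U_Ucar hfacts(4,5) by (auto simp: U_def)

lemma U_H1': "(a::'a) ^ q = a \<Longrightarrow> U a 0 \<in> H1' q h"
  unfolding H1'_iff using U_Ucar hfacts(1,2,4) by (auto simp: U_def)

lemma chi_facts:
  fixes \<psi> :: "'a \<Rightarrow> complex" and \<chi> :: "(nat \<Rightarrow> 'a) \<Rightarrow> complex"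
  assumes "\<chi> \<in> A_psi q h \<psi>"
  shows "\<And>a b. a \<in> Hset h \<Longrightarrow> b \<in> Hset h \<Longrightarrow> \<chi> (umult q h a b) = \<chi> a * \<chi> b"
    "\<And>a. \<chi> (tauTop h a) = \<psi> a"
  using assms by (auto simp: A_psi_def is_char_def)

lemma th_facts:
  fixes \<psi> :: "'a \<Rightarrow> complex" and \<theta> :: "(nat \<Rightarrow> 'a) \<Rightarrow> complex"
  assumes "extends_psi_tilde q h \<psi> \<theta>"
  shows "\<And>a b. a \<in> H1' q h \<Longrightarrow> b \<in> H1' q h \<Longrightarrow> \<theta> (umult q h a b) = \<theta> a * \<theta> b"
    "\<And>c. c \<in> H0' h \<Longrightarrow> \<theta> c = \<psi> (c NN)"
  using assms by (auto simp: extends_psi_tilde_def is_char_def psi_tilde_def hsimp)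

lemma wd:
  fixes \<psi> :: "'a \<Rightarrow> complex" and \<chi> \<theta> :: "(nat \<Rightarrow> 'a) \<Rightarrow> complex" and k k2 n n2 :: "nat \<Rightarrow> 'a"
  assumes chi: "\<chi> \<in> A_psi q h \<psi>" and th: "extends_psi_tilde q h \<psi> \<theta>"
    and k: "k \<in> Hset h" "k2 \<in> Hset h" and n: "n \<in> H1' q h" "n2 \<in> H1' q h"
    and eq: "umult q h k n = umult q h k2 n2"
  shows "\<chi> k * \<theta> n = \<chi> k2 * \<theta> n2"
proof -
  note chim = chi_facts(1)[OF chi] and chit = chi_facts(2)[OF chi]
  note thmu = th_facts(1)[OF th] and tht = th_facts(2)[OF th]
  have kU: "k \<in> Ucar h" "k2 \<in> Ucar h" and ko: "\<And>i. odd i \<Longrightarrow> k i = 0" "\<And>i. odd i \<Longrightarrow> k2 i = 0"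
    using k by (auto simp: Hset_iff)
  have nU: "n \<in> Ucar h" "n2 \<in> Ucar h" using n by (auto simp: H1'_iff)
  have nz: "\<And>i. i \<noteq> 0 \<Longrightarrow> i \<noteq> NN \<Longrightarrow> \<not> (odd i \<and> hm \<le> i) \<Longrightarrow> n i = 0"
    "\<And>i. i \<noteq> 0 \<Longrightarrow> i \<noteq> NN \<Longrightarrow> \<not> (odd i \<and> hm \<le> i) \<Longrightarrow> n2 i = 0"
    using n by (auto simp: H1'_iff)
  define t where "t = umult q h (inv\<^bsub>G\<^esub> k2) k"
  have tU: "t \<in> Ucar h" unfolding t_def by (rule closed[OF invU[OF kU(2)] kU(1)])
  have k2t: "umult q h k2 t = k" unfolding t_def by (rule mul_inv_cancel[OF kU(2,1)])
  have todd: "t m = e m" if "m \<le> NN" "odd m" for m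
  proof -
    have "(\<lambda>m. t m - e m) m = 0"
    proof (rule triL[where c=k2 and A=even and B=even])
      show "k2 0 = 1" using kU by (simp add: Ucar_iff)
      show "\<And>i. k2 i \<noteq> 0 \<Longrightarrow> even i" using ko by blast
      show "\<And>m. m \<le> NN \<Longrightarrow> \<not> even m \<Longrightarrow> umult q h k2 (\<lambda>m. t m - e m) m = 0"
        unfolding umult_diff_right k2t e_right[OF kU(2)] using ko by simp
    qed (use that in auto)
    thus ?thesis by simp
  qed
  have tn: "umult q h t n = n2"
  proof -
    have "umult q h k2 (umult q h t n) = umult q h k2 n2" using assoc[of k2 t n] k2t eq by simp
    thus ?thesis using gr.Units_l_cancel[of k2 "umult q h t n" n2] kU nU tU closed[OF tU nU(1)] by simp
  qed
  have tB: "t m = e m" if "m \<le> NN" "\<not> (m = NN \<or> (odd m \<and> hm \<le> m))" for m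
  proof -
    have "(\<lambda>m. t m - e m) m = 0"
    proof (rule triR[where c=n and A="\<lambda>i. i = 0 \<or> i = NN \<or> (odd i \<and> hm \<le> i)"
          and B="\<lambda>i. i = NN \<or> (odd i \<and> hm \<le> i)"])
      show "n 0 = 1" using nU by (simp add: Ucar_iff)
      show "\<And>i. n i \<noteq> 0 \<Longrightarrow> i = 0 \<or> i = NN \<or> (odd i \<and> hm \<le> i)" using nz by blast
      show "umult q h (\<lambda>m. t m - e m) n m = 0" if "m \<le> NN" "\<not> (m = NN \<or> (odd m \<and> hm \<le> m))" for m
      proof (cases "m = 0")
        case True thus ?thesis unfolding umult_diff_left tn e_left[OF nU(1)] using nU by (simp add: Ucar_iff)
      next
        case False thus ?thesis unfolding umult_diff_left tn e_left[OF nU(1)] using nz that by simp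
      qed
      show "\<And>i j. i = 0 \<or> i = NN \<or> (odd i \<and> hm \<le> i) \<Longrightarrow> j = NN \<or> (odd j \<and> hm \<le> j) \<Longrightarrow> i + j \<le> NN
         \<Longrightarrow> i + j = NN \<or> (odd (i + j) \<and> hm \<le> i + j)"
        using hNN hfacts(1) by auto
    qed (use that in auto)
    thus ?thesis by simp
  qed
  have tt: "t = tauTop h (t NN)"
  proof
    fix i show "t i = tauTop h (t NN) i"
    proof (cases "i \<le> NN")
      case False thus ?thesis using tU hfacts(3) by (auto simp: Ucar_iff tauTop_def hsimp)
    next
      case True
      show ?thesis
      proof (cases "i = 0 \<or> i = NN")
        case True thus ?thesis using tU by (auto simp: Ucar_iff tauTop_def hsimp)
      next
        case False
        hence "t i = e i" using todd[of i] tB[of i] True by (cases "odd i") auto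
        thus ?thesis using False by (simp add: e_def tauTop_def hsimp)
      qed
    qed
  qed
  have tH: "t \<in> Hset h" using tauTop_H tt by metis
  have tH0: "t \<in> H0' h" using tauTop_H0' tt by metis
  have "\<chi> k = \<chi> k2 * \<psi> (t NN)" using chim[OF k(2) tH] k2t chit[of "t NN"] tt by metis
  moreover have "\<theta> n2 = \<psi> (t NN) * \<theta> n" using thmu[OF H0'_sub[OF tH0] n(1)] tn tht[OF tH0] by simp
  ultimately show ?thesis by simp
qed

lemma chi_tilde_val:
  fixes \<psi> :: "'a \<Rightarrow> complex" and \<chi> \<theta> :: "(nat \<Rightarrow> 'a) \<Rightarrow> complex" and k n :: "nat \<Rightarrow> 'a"
  assumes chi: "\<chi> \<in> A_psi q h \<psi>" and th: "extends_psi_tilde q h \<psi> \<theta>"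
    and k: "k \<in> Hset h" and n: "n \<in> H1' q h"
  shows "chi_tilde q h \<chi> \<theta> (umult q h k n) = \<chi> k * \<theta> n"
proof -
  let ?P = "\<lambda>v. \<exists>k2\<in>Hset h. \<exists>n2\<in>H1' q h. umult q h k n = umult q h k2 n2 \<and> v = \<chi> k2 * \<theta> n2"
  have "?P (\<chi> k * \<theta> n)" using k n by blast
  hence "?P (SOME v. ?P v)" by (rule someI)
  then obtain k2 n2 where "k2 \<in> Hset h" "n2 \<in> H1' q h" "umult q h k n = umult q h k2 n2"
     "(SOME v. ?P v) = \<chi> k2 * \<theta> n2" by blast
  thus ?thesis using wd[OF chi th k _ n] unfolding chi_tilde_def by metis
qed

lemma psi0: "add_char \<psi> \<Longrightarrow> \<psi> (0::'a) = 1"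
proof -
  assume a: "add_char \<psi>"
  hence "\<psi> 0 = \<psi> 0 * \<psi> 0" "\<psi> 0 \<noteq> 0" unfolding add_char_def by (metis add_0)+
  thus ?thesis by simp
qed

lemma conj_mult:
  fixes a b u :: "nat \<Rightarrow> 'a"
  assumes "a \<in> Ucar h" "b \<in> Ucar h" "u \<in> Ucar h"
  shows "umult q h (umult q h u (umult q h a b)) (inv\<^bsub>G\<^esub> u) =
    umult q h (umult q h (umult q h u a) (inv\<^bsub>G\<^esub> u)) (umult q h (umult q h u b) (inv\<^bsub>G\<^esub> u))"
proof -
  have vu: "umult q h (inv\<^bsub>G\<^esub> u) u = e" using gr.l_inv[of u] assms by simp
  have "umult q h (umult q h (umult q h u a) (inv\<^bsub>G\<^esub> u)) (umult q h (umult q h u b) (inv\<^bsub>G\<^esub> u))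
     = umult q h (umult q h u a) (umult q h (umult q h (inv\<^bsub>G\<^esub> u) u) (umult q h b (inv\<^bsub>G\<^esub> u)))"
    by (simp add: assoc)
  also have "\<dots> = umult q h (umult q h u a) (umult q h b (inv\<^bsub>G\<^esub> u))"
    using vu e_left closed[OF assms(2) invU[OF assms(3)]] by simp
  finally show ?thesis by (simp add: assoc)
qed

lemma key:
  fixes \<psi> :: "'a \<Rightarrow> complex" and \<chi> \<theta> :: "(nat \<Rightarrow> 'a) \<Rightarrow> complex" and x :: "nat \<Rightarrow> 'a"
  assumes psi: "add_char \<psi>" and chi: "\<chi> \<in> A_psi q h \<psi>" and th: "extends_psi_tilde q h \<psi> \<theta>"
    and x: "x \<in> H' q h"
  shows "umult q h (umult q h (U \<beta> \<gamma>) x) (inv\<^bsub>G\<^esub> (U \<beta> \<gamma>)) \<in> H' q h \<and>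
    chi_tilde q h \<chi> \<theta> (umult q h (umult q h (U \<beta> \<gamma>) x) (inv\<^bsub>G\<^esub> (U \<beta> \<gamma>)))
      = chi_tilde q h \<chi> \<theta> x * \<psi> ((\<beta> - \<beta>^q) * x hm)"
proof -
  note thmu = th_facts(1)[OF th] and tht = th_facts(2)[OF th]
  let ?u = "U \<beta> \<gamma>" let ?v = "inv\<^bsub>G\<^esub> (U \<beta> \<gamma>)"
  obtain k n where k: "k \<in> Hset h" and n: "n \<in> H1' q h" and xkn: "x = umult q h k n" and nx: "n hm = x hm"
    using decomp[OF x] by blast
  have kU: "k \<in> Ucar h" using k by (simp add: Hset_iff)
  have nU: "n \<in> Ucar h" using n by (simp add: H1'_iff)
  define z where "z = (\<beta> - \<beta>^q) * n hm"
  have cn: "umult q h (umult q h ?u n) ?v = umult q h (tauTop h z) n"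
  proof -
    have "umult q h (umult q h ?u n) ?v = umult q h (tauTop h z) (umult q h n (umult q h ?u ?v))"
      unfolding conjU_n[OF n] tauTop_U z_def by (simp add: assoc)
    also have "umult q h ?u ?v = e" using gr.r_inv[of ?u] U_Ucar by simp
    finally show ?thesis using e_right[OF nU] by simp
  qed
  obtain w where w: "w \<in> H0' h" "w NN = 0" and ck: "umult q h (umult q h ?u k) ?v = umult q h k w"
    using conjU_k[OF k] by blast
  define m where "m = umult q h w (umult q h (tauTop h z) n)"
  have tz: "tauTop h z \<in> H1' q h" using H0'_sub tauTop_H0' by blast
  have mH: "m \<in> H1' q h" unfolding m_def using H1'_mult H0'_sub[OF w(1)] tz n by blast
  have eq: "umult q h (umult q h ?u x) ?v = umult q h k m"
    unfolding xkn conj_mult[OF kU nU U_Ucar] ck cn m_def by (simp add: assoc)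
  have "umult q h k m \<in> H' q h" using H'_mult Hset_sub[OF k] H1'_sub[OF mH] by blast
  moreover have "chi_tilde q h \<chi> \<theta> (umult q h k m) = \<chi> k * \<theta> m"
    by (rule chi_tilde_val[OF chi th k mH])
  moreover have "\<theta> m = \<theta> n * \<psi> z"
  proof -
    have "\<theta> m = \<theta> w * (\<theta> (tauTop h z) * \<theta> n)"
      unfolding m_def using thmu H0'_sub[OF w(1)] tz n H1'_mult by metis
    also have "\<theta> w = 1" using tht[OF w(1)] w(2) psi0[OF psi] by simp
    also have "\<theta> (tauTop h z) = \<psi> z" using tht[OF tauTop_H0'[of z]] by (simp add: tauTop_U)
    finally show ?thesis by simp
  qed
  moreover have "chi_tilde q h \<chi> \<theta> x = \<chi> k * \<theta> n"
    unfolding xkn by (rule chi_tilde_val[OF chi th k n])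
  ultimately show ?thesis using eq nx z_def by simp
qed

lemma n_fact:
  fixes n :: "nat \<Rightarrow> 'a"
  assumes n: "n \<in> H1' q h"
  shows "n(hm := 0) \<in> H0' h \<and> n = umult q h (U (n hm) 0) (n(hm := 0))"
proof
  have nU: "n \<in> Ucar h" and nz: "\<And>i. i \<noteq> 0 \<Longrightarrow> i \<noteq> NN \<Longrightarrow> \<not>(odd i \<and> hm \<le> i) \<Longrightarrow> n i = 0"
    using n by (auto simp: H1'_iff)
  have n0U: "n(hm := 0) \<in> Ucar h" using nU hfacts(1) by (auto simp: Ucar_iff)
  show "n(hm := 0) \<in> H0' h" unfolding H0'_iff
  proof (intro conjI n0U allI impI)
    fix i assume "i \<noteq> 0 \<and> i \<noteq> NN \<and> \<not> (odd i \<and> hm < i)"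
    thus "(n(hm := 0)) i = 0" using nz[of i] by (cases "i = hm") auto
  qed
  show "n = umult q h (U (n hm) 0) (n(hm := 0))"
  proof
    fix m show "n m = umult q h (U (n hm) 0) (n(hm := 0)) m"
    proof (cases "m \<le> NN")
      case False thus ?thesis using nU by (simp add: um_gt Ucar_iff)
    next
      case True
      have L: "umult q h (U (n hm) 0) (n(hm := 0)) m = (n(hm := 0)) m + (if hm \<le> m then n hm * (n(hm := 0)) (m - hm) ^ q else 0)
         + (if m = NN then 0 * (n(hm := 0)) 0 else 0)" by (rule UL[OF True])
      show ?thesis
      proof (cases "m = hm")
        case True thus ?thesis unfolding L using nU hfacts(1,2) by (simp add: Ucar_iff)
      next
        case False
        have "(n(hm := 0)) (m - hm) = 0" if "hm \<le> m"
        proof (cases "m - hm = hm")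
          case False
          have "m - hm \<noteq> 0" "m - hm \<noteq> NN" "\<not> (odd (m-hm) \<and> hm \<le> m - hm)"
            using False \<open>m \<noteq> hm\<close> that True hNN by auto
          thus ?thesis using nz by simp
        qed simp
        thus ?thesis unfolding L using False zq by simp
      qed
    qed
  qed
qed

lemma U_mult: "umult q h (U a 0) (U a' 0) = umult q h (tauTop h (a * a'^q)) (U (a + a') (0::'a))"
proof
  fix m show "umult q h (U a 0) (U a' 0) m = umult q h (tauTop h (a * a'^q)) (U (a + a') 0) m"
  proof (cases "m \<le> NN")
    case False thus ?thesis by (simp add: um_gt)
  next
    case True
    have z: "U a' 0 (m - hm) = 0" if "hm \<le> m" "m \<noteq> hm" "m \<noteq> NN"
      using that True hNN by (intro Uo) auto
    show ?thesis unfolding tauTop_U UL[OF True]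
    proof -
      consider "m = 0" | "m = hm" | "m = NN" | "m \<noteq> 0" "m \<noteq> hm" "m \<noteq> NN" by blast
      thus "U a' 0 m + (if hm \<le> m then a * U a' 0 (m - hm) ^ q else 0) + (if m = NN then 0 * U a' 0 0 else 0) =
         U (a + a') 0 m + (if hm \<le> m then 0 * U (a + a') 0 (m - hm) ^ q else 0) + (if m = NN then a * a' ^ q * U (a + a') 0 0 else 0)"
      proof cases
        case 1 thus ?thesis using hfacts(1,3) by simp
      next
        case 2 thus ?thesis using hfacts(1,2) by (simp add: add.commute)
      next
        case 3 thus ?thesis using hfacts(1,2) less_imp_le[OF hfacts(2)] by (simp add: NNh)
      next
        case 4 thus ?thesis using z Uo[of m] zq by simp
      qed
    qed
  qed
qed

lemma sum_char_zero:
  fixes \<nu> :: "'b::ab_group_add \<Rightarrow> complex"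
  assumes fin: "finite S" and s0: "s0 \<in> S" and cl: "\<And>a. a \<in> S \<Longrightarrow> a + s0 \<in> S" "\<And>a. a \<in> S \<Longrightarrow> a - s0 \<in> S"
    and mult: "\<And>a. a \<in> S \<Longrightarrow> \<nu> (a + s0) = \<nu> a * \<nu> s0" and ne: "\<nu> s0 \<noteq> 1"
  shows "sum \<nu> S = 0"
proof -
  have "sum \<nu> S = sum (\<lambda>a. \<nu> (a + s0)) S"
    by (rule sum.reindex_bij_witness[of _ "\<lambda>a. a + s0" "\<lambda>a. a - s0"]) (auto simp: cl)
  also have "\<dots> = \<nu> s0 * sum \<nu> S" by (simp add: mult sum_distrib_left mult.commute)
  finally have "(1 - \<nu> s0) * sum \<nu> S = 0" by (simp add: algebra_simps)
  thus ?thesis using ne by simp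
qed

lemma char_exists:
  fixes \<psi> :: "'a \<Rightarrow> complex" and lam :: "'a \<Rightarrow> complex"
  assumes psi: "add_char \<psi>" and cond: "conductor_q2 q \<psi>"
    and lm: "\<And>a b. a^q = a \<Longrightarrow> b^q = b \<Longrightarrow> lam (a + b) = lam a * lam b" and l0: "lam 0 = 1"
  shows "\<exists>b. \<forall>a. a^q = a \<longrightarrow> lam a = \<psi> ((b - b^q) * a)"
proof (rule ccontr)
  assume neg: "\<not> ?thesis"
  have pa: "\<And>x y. \<psi> (x+y) = \<psi> x * \<psi> y" using psi by (simp add: add_char_def)
  have pn: "\<psi> y * \<psi> (-y) = 1" for y using pa[of y "-y"] psi0[OF psi] by simp
  define F where "F = {a::'a. a^q = a}"
  have finF: "finite F" by simp
  have F0: "0 \<in> F" using zq by (simp add: F_def)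
  have Fadd: "a + b \<in> F" if "a \<in> F" "b \<in> F" for a b using that frob by (simp add: F_def)
  have Fminus: "a - b \<in> F" if "a \<in> F" "b \<in> F" for a b using that frob_diff[of a b 1] by (simp add: F_def)
  define \<nu> where "\<nu> b a = lam a * \<psi> (-((b - b^q) * a))" for b a
  have S1: "sum (\<nu> b) F = 0" for b
  proof -
    from neg obtain a0 where a0: "a0^q = a0" "lam a0 \<noteq> \<psi> ((b - b^q)*a0)" by blast
    show "sum (\<nu> b) F = 0"
    proof (rule sum_char_zero[OF finF, of a0])
      show "a0 \<in> F" using a0 by (simp add: F_def)
      show "\<And>a. a \<in> F \<Longrightarrow> a + a0 \<in> F" "\<And>a. a \<in> F \<Longrightarrow> a - a0 \<in> F"
        using Fadd Fminus \<open>a0 \<in> F\<close> by auto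
      show "\<nu> b (a + a0) = \<nu> b a * \<nu> b a0" if "a \<in> F" for a
      proof -
        have "\<psi> (-((b - b^q) * (a + a0))) = \<psi> (-((b - b^q) * a) + -((b - b^q) * a0))"
          by (rule arg_cong[where f=\<psi>]) (simp add: algebra_simps)
        also have "\<dots> = \<psi> (-((b - b^q) * a)) * \<psi> (-((b - b^q) * a0))" by (rule pa)
        finally show ?thesis using lm[of a a0] that a0 unfolding \<nu>_def F_def by simp
      qed
      show "\<nu> b a0 \<noteq> 1"
      proof
        assume "\<nu> b a0 = 1"
        hence e1: "lam a0 * \<psi> (-((b - b^q) * a0)) = \<psi> ((b - b^q) * a0) * \<psi> (-((b - b^q) * a0))"
          using pn[of "(b - b^q) * a0"] by (simp add: \<nu>_def)
        have "\<psi> (-((b - b^q) * a0)) \<noteq> 0" using psi by (simp add: add_char_def)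
        hence "lam a0 = \<psi> ((b - b^q) * a0)" using e1 by (metis mult_right_cancel)
        thus False using a0 by simp
      qed
    qed
  qed
  have inner: "lam a * (\<Sum>b\<in>UNIV. \<psi> (-((b - b^q) * a))) = (if a = 0 then of_nat (card (UNIV::'a set)) else 0)"
    if a: "a \<in> F" for a
  proof (cases "a = 0")
    case True thus ?thesis using l0 psi0[OF psi] by simp
  next
    case False
    obtain x where x: "\<psi> (x^q) \<noteq> \<psi> x" using cond by (auto simp: conductor_q2_def)
    have aq: "a^q = a" using a by (simp add: F_def)
    have "(\<Sum>b\<in>UNIV. \<psi> (-((b - b^q) * a))) = 0"
    proof (rule sum_char_zero[of UNIV "x / a"])
      show "\<psi> (-((b + x/a - (b + x/a)^q) * a)) = \<psi> (-((b - b^q) * a)) * \<psi> (-((x/a - (x/a)^q) * a))" for b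
      proof -
        have "\<psi> (-((b + x/a - (b + x/a)^q) * a)) = \<psi> (-((b - b^q) * a) + -((x/a - (x/a)^q) * a))"
          by (rule arg_cong[where f=\<psi>]) (simp add: algebra_simps frob)
        also have "\<dots> = \<psi> (-((b - b^q) * a)) * \<psi> (-((x/a - (x/a)^q) * a))" by (rule pa)
        finally show ?thesis .
      qed
      have "-((x/a - (x/a)^q) * a) = x^q - x" using aq False by (simp add: power_divide field_simps)
      moreover have "\<psi> (x^q - x) \<noteq> 1"
      proof
        assume "\<psi> (x^q - x) = 1"
        hence "\<psi> (x^q) = \<psi> x" using pa[of "x^q - x" x] by simp
        thus False using x by simp
      qed
      ultimately show "\<psi> (-((x/a - (x/a)^q) * a)) \<noteq> 1" by simp
    qed auto
    thus ?thesis using False by simp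
  qed
  have "0 = (\<Sum>b\<in>UNIV. sum (\<nu> b) F)" using S1 by simp
  also have "\<dots> = (\<Sum>a\<in>F. \<Sum>b\<in>UNIV. \<nu> b a)" by (rule sum.swap)
  also have "\<dots> = (\<Sum>a\<in>F. lam a * (\<Sum>b\<in>UNIV. \<psi> (-((b - b^q) * a))))" by (simp add: \<nu>_def sum_distrib_left)
  also have "\<dots> = (\<Sum>a\<in>F. if a = 0 then of_nat (card (UNIV::'a set)) else 0)"
    by (rule sum.cong[OF refl]) (rule inner)
  also have "\<dots> = of_nat (card (UNIV::'a set))" using F0 finF by simp
  finally show False by simp
qed

lemma theta_rel:
  fixes \<psi> :: "'a \<Rightarrow> complex" and \<theta>1 \<theta>2 :: "(nat \<Rightarrow> 'a) \<Rightarrow> complex"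
  assumes psi: "add_char \<psi>" and cond: "conductor_q2 q \<psi>"
    and th1: "extends_psi_tilde q h \<psi> \<theta>1" and th2: "extends_psi_tilde q h \<psi> \<theta>2"
  shows "\<exists>b. \<forall>n\<in>H1' q h. \<theta>2 n = \<theta>1 n * \<psi> ((b - b^q) * n hm)"
proof -
  note m1 = th_facts(1)[OF th1] and t1 = th_facts(2)[OF th1]
  note m2 = th_facts(1)[OF th2] and t2 = th_facts(2)[OF th2]
  have nz1: "\<And>c. c \<in> H1' q h \<Longrightarrow> \<theta>1 c \<noteq> 0" using th1 by (simp add: extends_psi_tilde_def is_char_def)
  have pnz: "\<And>x. \<psi> x \<noteq> 0" using psi by (simp add: add_char_def)
  define lam where "lam a = \<theta>2 (U a 0) / \<theta>1 (U a 0)" for a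
  have split: "\<theta> (U (a + a') 0) = \<theta> (U a 0) * \<theta> (U a' 0) / \<psi> (a * a'^q)"
    if th: "extends_psi_tilde q h \<psi> \<theta>" and a: "a^q = a" "a'^q = a'" for \<theta> a a'
  proof -
    note m = th_facts(1)[OF th] and t = th_facts(2)[OF th]
    have aa: "(a + a')^q = a + a'" using a frob by simp
    have "\<theta> (U a 0) * \<theta> (U a' 0) = \<theta> (umult q h (U a 0) (U a' 0))" using m U_H1' a by metis
    also have "\<dots> = \<theta> (tauTop h (a * a'^q)) * \<theta> (U (a + a') 0)"
      unfolding U_mult using m H0'_sub[OF tauTop_H0'] U_H1'[OF aa] by metis
    also have "\<theta> (tauTop h (a * a'^q)) = \<psi> (a * a'^q)" using t[OF tauTop_H0'] by (simp add: tauTop_U)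
    finally show ?thesis using pnz by (simp add: field_simps)
  qed
  have "\<exists>b. \<forall>a. a^q = a \<longrightarrow> lam a = \<psi> ((b - b^q) * a)"
  proof (rule char_exists[OF psi cond])
    show "lam (a + b) = lam a * lam b" if "a^q = a" "b^q = b" for a b
      unfolding lam_def split[OF th1 that] split[OF th2 that] using pnz by simp
    have "U 0 0 = tauTop h (0::'a)" by (simp add: tauTop_U)
    thus "lam 0 = 1" unfolding lam_def using t1[OF tauTop_H0'] t2[OF tauTop_H0'] psi0[OF psi]
      by (simp add: tauTop_U)
  qed
  then obtain b where b: "\<And>a. a^q = a \<Longrightarrow> lam a = \<psi> ((b - b^q) * a)" by blast
  have "\<theta>2 n = \<theta>1 n * \<psi> ((b - b^q) * n hm)" if n: "n \<in> H1' q h" for n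
  proof -
    obtain n0H: "n(hm := 0) \<in> H0' h" and neq: "n = umult q h (U (n hm) 0) (n(hm := 0))" using n_fact[OF n] by blast
    have nq: "n hm ^ q = n hm" using n by (simp add: H1'_iff)
    have UH: "U (n hm) 0 \<in> H1' q h" using U_H1'[OF nq] .
    have e1: "\<theta>1 n = \<theta>1 (U (n hm) 0) * \<psi> ((n(hm := 0)) NN)"
      using m1[OF UH H0'_sub[OF n0H]] t1[OF n0H] neq by metis
    have e2: "\<theta>2 n = \<theta>2 (U (n hm) 0) * \<psi> ((n(hm := 0)) NN)"
      using m2[OF UH H0'_sub[OF n0H]] t2[OF n0H] neq by metis
    have "\<theta>2 (U (n hm) 0) = \<theta>1 (U (n hm) 0) * \<psi> ((b - b^q) * n hm)"
      using b[OF nq] nz1[OF UH] unfolding lam_def by (simp add: field_simps)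
    thus ?thesis using e1 e2 by simp
  qed
  thus ?thesis by blast
qed

lemma transfer_iso:
  fixes u v :: "nat \<Rightarrow> 'a" and K :: "(nat \<Rightarrow> 'a) set" and c1 c2 :: "(nat \<Rightarrow> 'a) \<Rightarrow> complex"
  assumes uU: "u \<in> Ucar h" and vU: "v \<in> Ucar h" and uv: "umult q h u v = e" and vu: "umult q h v u = e"
    and KU: "K \<subseteq> Ucar h"
    and P1: "\<And>x. x \<in> K \<Longrightarrow> umult q h (umult q h u x) v \<in> K \<and> c1 (umult q h (umult q h u x) v) = c2 x"
    and P2: "\<And>x. x \<in> K \<Longrightarrow> umult q h (umult q h v x) u \<in> K \<and> c2 (umult q h (umult q h v x) u) = c1 x"
  shows "Ind_iso q h K c1 c2"
proof -
  define T where "T u f = (\<lambda>g. if g \<in> Ucar h then f (umult q h u g) else 0)" for u and f :: "(nat \<Rightarrow> 'a) \<Rightarrow> complex"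
  have conjeq: "umult q h u (umult q h x g) = umult q h (umult q h (umult q h u x) v) (umult q h u g)"
    if "x \<in> Ucar h" "g \<in> Ucar h" "umult q h v u = e" "u \<in> Ucar h" "v \<in> Ucar h" for u v x g :: "nat \<Rightarrow> 'a"
  proof -
    have "umult q h (umult q h (umult q h u x) v) (umult q h u g) = umult q h (umult q h u x) (umult q h (umult q h v u) g)"
      by (simp add: assoc)
    also have "\<dots> = umult q h u (umult q h x g)" using that e_left by (simp add: assoc)
    finally show ?thesis by simp
  qed
  have maps: "T u f \<in> IndSp q h K c2'" if f: "f \<in> IndSp q h K c1'" and uU: "u \<in> Ucar h" and vU: "v \<in> Ucar h"
     and vu: "umult q h v u = e"
     and P: "\<And>x. x \<in> K \<Longrightarrow> umult q h (umult q h u x) v \<in> K \<and> c1' (umult q h (umult q h u x) v) = c2' x"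
    for f and u v :: "nat \<Rightarrow> 'a" and c1' c2'
  proof -
    have fK: "\<And>x g. x \<in> K \<Longrightarrow> g \<in> Ucar h \<Longrightarrow> f (umult q h x g) = c1' x * f g" using f by (simp add: IndSp_def)
    show ?thesis unfolding IndSp_def
    proof (intro CollectI conjI allI ballI impI)
      fix g :: "nat \<Rightarrow> 'a" assume "g \<notin> Ucar h" thus "T u f g = 0" by (simp add: T_def)
    next
      fix x g :: "nat \<Rightarrow> 'a" assume x: "x \<in> K" and g: "g \<in> Ucar h"
      have xU: "x \<in> Ucar h" using x KU by blast
      have "T u f (umult q h x g) = f (umult q h u (umult q h x g))" using closed[OF xU g] by (simp add: T_def)
      also have "\<dots> = f (umult q h (umult q h (umult q h u x) v) (umult q h u g))" using conjeq[OF xU g vu uU vU] by simp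
      also have "\<dots> = c1' (umult q h (umult q h u x) v) * f (umult q h u g)" using fK P[OF x] closed[OF uU g] by blast
      also have "\<dots> = c2' x * T u f g" using P[OF x] g by (simp add: T_def)
      finally show "T u f (umult q h x g) = c2' x * T u f g" .
    qed
  qed
  have inv1: "T v (T u f) = f" if "f \<in> IndSp q h K c" "umult q h u v = e" "v \<in> Ucar h" "u \<in> Ucar h" for f and u v :: "nat \<Rightarrow> 'a" and c
  proof
    fix g show "T v (T u f) g = f g"
    proof (cases "g \<in> Ucar h")
      case True
      have "umult q h u (umult q h v g) = g" using that True e_left by (simp flip: assoc)
      thus ?thesis using True closed[OF that(3) True] by (simp add: T_def)
    next
      case False thus ?thesis using that(1) by (simp add: T_def IndSp_def)
    qed
  qed
  show ?thesis unfolding Ind_iso_def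
  proof (intro exI[of _ "T u"] conjI ballI allI)
    show "bij_betw (T u) (IndSp q h K c1) (IndSp q h K c2)"
    proof (rule bij_betw_byWitness[where f'="T v"])
      show "\<forall>a\<in>IndSp q h K c1. T v (T u a) = a" using inv1 uv uU vU by blast
      show "\<forall>a\<in>IndSp q h K c2. T u (T v a) = a" using inv1 vu uU vU by blast
      show "T u ` IndSp q h K c1 \<subseteq> IndSp q h K c2" using maps[OF _ uU vU vu P1] by blast
      show "T v ` IndSp q h K c2 \<subseteq> IndSp q h K c1" using maps[OF _ vU uU uv P2] by blast
    qed
  next
    fix f f' show "T u (\<lambda>g. f g + f' g) = (\<lambda>g. T u f g + T u f' g)" by (auto simp: T_def)
  next
    fix c f show "T u (\<lambda>g. c * f g) = (\<lambda>g. c * T u f g)" by (auto simp: T_def)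
  next
    fix x :: "nat \<Rightarrow> 'a" and f assume x: "x \<in> Ucar h"
    show "T u (IndAct q h x f) = IndAct q h x (T u f)"
    proof
      fix g :: "nat \<Rightarrow> 'a" show "T u (IndAct q h x f) g = IndAct q h x (T u f) g"
        using closed[OF uU] closed[OF _ x] by (simp add: T_def IndAct_def assoc)
    qed
  qed
qed

lemma main_iso:
  fixes \<psi> :: "'a \<Rightarrow> complex" and \<chi> \<theta>1 \<theta>2 :: "(nat \<Rightarrow> 'a) \<Rightarrow> complex"
  assumes psi: "add_char \<psi>" and cond: "conductor_q2 q \<psi>" and chi: "\<chi> \<in> A_psi q h \<psi>"
    and th1: "extends_psi_tilde q h \<psi> \<theta>1" and th2: "extends_psi_tilde q h \<psi> \<theta>2"
  shows "Ind_iso q h (H' q h) (chi_tilde q h \<chi> \<theta>1) (chi_tilde q h \<chi> \<theta>2)"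
proof -
  obtain b where b: "\<And>n. n \<in> H1' q h \<Longrightarrow> \<theta>2 n = \<theta>1 n * \<psi> ((b - b^q) * n hm)"
    using theta_rel[OF psi cond th1 th2] by blast
  have pa: "\<And>x y. \<psi> (x+y) = \<psi> x * \<psi> y" using psi by (simp add: add_char_def)
  have pn: "\<psi> y * \<psi> (-y) = 1" for y using pa[of y "-y"] psi0[OF psi] by simp
  have chi2: "chi_tilde q h \<chi> \<theta>2 x = chi_tilde q h \<chi> \<theta>1 x * \<psi> ((b - b^q) * x hm)" if x: "x \<in> H' q h" for x
  proof -
    obtain k n where k: "k \<in> Hset h" and n: "n \<in> H1' q h" and xkn: "x = umult q h k n" and nx: "n hm = x hm"
      using decomp[OF x] by blast
    show ?thesis unfolding xkn chi_tilde_val[OF chi th1 k n] chi_tilde_val[OF chi th2 k n]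
      using b[OF n] nx xkn by simp
  qed
  define u where "u = U b 0"
  define v where "v = inv\<^bsub>G\<^esub> u"
  have uU: "u \<in> Ucar h" by (simp add: u_def U_Ucar)
  have vU: "v \<in> Ucar h" by (simp add: v_def invU[OF uU])
  have uv: "umult q h u v = e" using gr.r_inv[of u] uU by (simp add: v_def)
  have vu: "umult q h v u = e" using gr.l_inv[of u] uU by (simp add: v_def)
  have vdef: "v = U (-b) (b * b^q - 0)" unfolding v_def u_def by (rule inv_U)
  have ivu: "inv\<^bsub>G\<^esub> v = u" unfolding v_def using gr.inv_inv[of u] uU by simp
  show ?thesis
  proof (rule transfer_iso[OF uU vU uv vu])
    show "H' q h \<subseteq> Ucar h" by (auto simp: H'_iff)
    fix x :: "nat \<Rightarrow> 'a" assume x: "x \<in> H' q h"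
    show "umult q h (umult q h u x) v \<in> H' q h \<and>
        chi_tilde q h \<chi> \<theta>1 (umult q h (umult q h u x) v) = chi_tilde q h \<chi> \<theta>2 x"
      using key[OF psi chi th1 x, of b 0] chi2[OF x] unfolding u_def v_def by simp
    have k2: "umult q h (umult q h v x) u \<in> H' q h \<and>
        chi_tilde q h \<chi> \<theta>2 (umult q h (umult q h v x) u) = chi_tilde q h \<chi> \<theta>2 x * \<psi> ((-b - (-b)^q) * x hm)"
      using key[OF psi chi th2 x, of "-b" "b * b^q - 0"] unfolding vdef[symmetric] ivu by simp
    have "(-b)^q = - (b^q)" using frob_minus[of b 1] by simp
    hence "(-b - (-b)^q) * x hm = - ((b - b^q) * x hm)" by (simp add: algebra_simps)
    thus "umult q h (umult q h v x) u \<in> H' q h \<and>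
        chi_tilde q h \<chi> \<theta>2 (umult q h (umult q h v x) u) = chi_tilde q h \<chi> \<theta>1 x"
      using k2 chi2[OF x] pn[of "(b - b^q) * x hm"] by (simp add: mult.assoc)
  qed
qed

end

lemma card_of_nat_zero: "of_nat (card (UNIV :: 'a::{field,finite} set)) = (0::'a)"
proof -
  have "(\<Sum>y\<in>(UNIV::'a set). y) = (\<Sum>y\<in>UNIV. y + 1)"
    by (rule sum.reindex_bij_witness[of _ "\<lambda>y. y + 1" "\<lambda>y. y - 1"]) auto
  also have "\<dots> = (\<Sum>y\<in>UNIV. y) + of_nat (card (UNIV :: 'a set))" by (simp add: sum.distrib)
  finally show ?thesis by simp
qed

lemma power_card_same: "(x::'a::{field,finite}) ^ card (UNIV :: 'a set) = x"
proof (cases "x = 0")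
  case False
  have "x * (\<Prod>y\<in>UNIV-{0}. x * y) = x * x ^ (card (UNIV :: 'a set) - 1) * \<Prod>(UNIV-{0})"
    by (simp add: prod.distrib mult_ac)
  also have "x * x ^ (card (UNIV :: 'a set) - 1) = x ^ Suc (card (UNIV :: 'a set) - 1)"
    by (subst power_Suc) auto
  also have "Suc (card (UNIV :: 'a set) - 1) = card (UNIV :: 'a set)"
    using finite_UNIV_card_ge_0[where ?'a = 'a] by simp
  also have "(\<Prod>y\<in>UNIV-{0}. x * y) = (\<Prod>y\<in>UNIV-{0}. y)"
    by (rule prod.reindex_bij_witness[of _ "\<lambda>y. y / x" "\<lambda>y. x * y"]) (use False in auto)
  finally show ?thesis
    by simp
qed (use finite_UNIV_card_ge_0[where ?'a = 'a] in auto)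

lemma UG_intro:
  fixes p q h :: nat
  assumes "prime p" and "\<exists>k>0. q = p ^ k" and "card (UNIV :: 'a::{field,finite} set) = q ^ 2"
    and "even h" and "h \<ge> 2"
  shows "UG TYPE('a) q h"
proof -
  obtain k where k: "k > 0" "q = p ^ k" using assms(2) by blast
  have cpos: "CHAR('a) > 0" by (rule finite_imp_CHAR_pos) simp
  have cp: "prime CHAR('a)" by (rule prime_CHAR_semidom[OF cpos])
  have "CHAR('a) dvd card (UNIV :: 'a set)" using card_of_nat_zero of_nat_eq_0_iff_char_dvd by blast
  hence "CHAR('a) dvd p ^ (k * 2)" using assms(3) k by (simp add: power_mult)
  hence "CHAR('a) dvd p" using prime_dvd_power cp by blast
  hence cpe: "CHAR('a) = p" using primes_dvd_imp_eq cp assms(1) by blast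
  show ?thesis
  proof
    show "2 \<le> h" "even h" by fact+
    show "2 \<le> q" using k prime_ge_2_nat[OF assms(1)]
    proof -
      have "p ^ 1 \<le> p ^ k" by (rule power_increasing) (use k prime_ge_2_nat[OF assms(1)] in auto)
      thus ?thesis using k prime_ge_2_nat[OF assms(1)] by simp
    qed
    show "(x + y) ^ q = x ^ q + y ^ q" for x y :: 'a
      by (rule freshmans_dream'[OF cp]) (simp add: cpe k)
    show "x ^ (q^2) = x" for x :: 'a using power_card_same[of x] assms(3) by simp
  qed
qed

theorem lemma2p13:
  fixes p q h :: nat
    and \<psi> :: "'a::{field,finite} \<Rightarrow> complex"
    and \<chi> \<theta>1 \<theta>2 :: "(nat \<Rightarrow> 'a) \<Rightarrow> complex"
  assumes "prime p" and "\<exists>k>0. q = p ^ k" and "card (UNIV :: 'a set) = q ^ 2"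
    and "even h" and "h \<ge> 2"
    and "add_char \<psi>" and "conductor_q2 q \<psi>"
    and "\<chi> \<in> A_psi q h \<psi>"
    and "extends_psi_tilde q h \<psi> \<theta>1" and "extends_psi_tilde q h \<psi> \<theta>2"
  shows "Ind_iso q h (H' q h) (chi_tilde q h \<chi> \<theta>1) (chi_tilde q h \<chi> \<theta>2)"
proof -
  interpret UG "TYPE('a)" q h by (rule UG_intro[OF assms(1-5)])
  show ?thesis by (rule main_iso[OF assms(6-10)])
qed

end
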